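(* Let $E_3$ be the exceptional simple Jordan algebra of $3\times3$ Hermitian matrices over the complex octonions, and let $L(E_3)=U_{-1}\oplus U_0\oplus U_1$ be its associated graded Lie algebra, which is the simple Lie algebra of type $E_7$ with its $3$-grading. Then $L(E_3)$ has no $2$-graded representation $\rho$ with $\rho(U_{-1})\neq 0$.
   Context: $L(A)$ for a Jordan algebra $A$ (product $*$) is $U_{-1}\oplus U_0\oplus U_1$ with $U_{-1}$ the space of $A$, $U_0=\mathrm{span}\{L_a,[L_a,L_b]\}$ ($L_a(x)=a*x$), $U_1=\mathrm{span}\{\bar A, A_a\}$ where $\bar A(x,y)=x*y$, $A_a(x,y)=(x*a)*y+(y*a)*x-a*(x*y)$, with skew bracket $[U_{-1},U_{-1}]=0=[U_1,U_1]$, $[S,a]=S(a)$, $[S_1,S_2]=S_1S_2-S_2S_1$, $[B,a]=(y\mapsto B(a,y))$, $[S,B]=((x,y)\mapsto S(B(x,y))-B(Sx,y)-B(x,Sy))$. A representation $\rho$ of a graded Lie algebra $G=\bigoplus U_i$ on $V$ is $l$-graded if $V=V_1\oplus\dots\oplus V_l$ with all $V_j\neq0$ and $\rho(U_i)V_j\subset V_{i+j}$ ($V_k=0$ for $k\notin\{1,\dots,l\}$). *)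

theory Defs
  imports Complex_Main "HOL-Library.Product_Plus"
begin

text \<open>Level 0 is the field of complex numbers with trivial (identity) involution.
  Level 3 is the algebra of complex octonions (complexified octonions).\<close>

type_synonym c1 = "complex \<times> complex"
type_synonym c2 = "c1 \<times> c1"
type_synonym oct = "c2 \<times> c2"

fun m1 :: "c1 \<Rightarrow> c1 \<Rightarrow> c1" where
  "m1 (a, b) (c, d) = (a * c - d * b, d * a + b * c)"
fun cj1 :: "c1 \<Rightarrow> c1" where "cj1 (a, b) = (a, - b)"
fun s1 :: "complex \<Rightarrow> c1 \<Rightarrow> c1" where "s1 k (a, b) = (k * a, k * b)"

fun m2 :: "c2 \<Rightarrow> c2 \<Rightarrow> c2" where
  "m2 (a, b) (c, d) = (m1 a c - m1 (cj1 d) b, m1 d a + m1 b (cj1 c))"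
fun cj2 :: "c2 \<Rightarrow> c2" where "cj2 (a, b) = (cj1 a, - b)"
fun s2 :: "complex \<Rightarrow> c2 \<Rightarrow> c2" where "s2 k (a, b) = (s1 k a, s1 k b)"

fun om :: "oct \<Rightarrow> oct \<Rightarrow> oct" where
  "om (a, b) (c, d) = (m2 a c - m2 (cj2 d) b, m2 d a + m2 b (cj2 c))"
fun ocj :: "oct \<Rightarrow> oct" where "ocj (a, b) = (cj2 a, - b)"
fun osc :: "complex \<Rightarrow> oct \<Rightarrow> oct" where "osc k (a, b) = (s2 k a, s2 k b)"

definition oemb :: "complex \<Rightarrow> oct" where
  "oemb k = (((k, 0), (0, 0)), ((0, 0), (0, 0)))"
definition ore :: "oct \<Rightarrow> complex" where
  "ore x = fst (fst (fst x))"

type_synonym e3 = "complex \<times> complex \<times> complex \<times> oct \<times> oct \<times> oct"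

fun toMat :: "e3 \<Rightarrow> nat \<Rightarrow> nat \<Rightarrow> oct" where
  "toMat (a1, a2, a3, x1, x2, x3) i j =
     [[oemb a1, x3, ocj x2], [ocj x3, oemb a2, x1], [x2, ocj x1, oemb a3]] ! i ! j"

definition fromMat :: "(nat \<Rightarrow> nat \<Rightarrow> oct) \<Rightarrow> e3" where
  "fromMat M = (ore (M 0 0), ore (M 1 1), ore (M 2 2), M 1 2, M 2 0, M 0 1)"

definition matmul :: "(nat \<Rightarrow> nat \<Rightarrow> oct) \<Rightarrow> (nat \<Rightarrow> nat \<Rightarrow> oct) \<Rightarrow> nat \<Rightarrow> nat \<Rightarrow> oct" where
  "matmul X Y i j = (\<Sum>k<3. om (X i k) (Y k j))"

definition jprod :: "e3 \<Rightarrow> e3 \<Rightarrow> e3" where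
  "jprod x y = fromMat (\<lambda>i j. osc (1/2) (matmul (toMat x) (toMat y) i j + matmul (toMat y) (toMat x) i j))"

fun esc :: "complex \<Rightarrow> e3 \<Rightarrow> e3" where
  "esc k (a1, a2, a3, x1, x2, x3) = (k * a1, k * a2, k * a3, osc k x1, osc k x2, osc k x3)"

inductive_set cspan :: "('b \<Rightarrow> 'b \<Rightarrow> 'b) \<Rightarrow> 'b \<Rightarrow> (complex \<Rightarrow> 'b \<Rightarrow> 'b) \<Rightarrow> 'b set \<Rightarrow> 'b set"
  for ad :: "'b \<Rightarrow> 'b \<Rightarrow> 'b" and z :: 'b and sm :: "complex \<Rightarrow> 'b \<Rightarrow> 'b" and G :: "'b set" where
  cspan_zero: "z \<in> cspan ad z sm G"
| cspan_gen: "g \<in> G \<Longrightarrow> g \<in> cspan ad z sm G"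
| cspan_add: "x \<in> cspan ad z sm G \<Longrightarrow> y \<in> cspan ad z sm G \<Longrightarrow> ad x y \<in> cspan ad z sm G"
| cspan_smul: "x \<in> cspan ad z sm G \<Longrightarrow> sm c x \<in> cspan ad z sm G"

definition Lop :: "('a \<Rightarrow> 'a \<Rightarrow> 'a) \<Rightarrow> 'a \<Rightarrow> 'a \<Rightarrow> 'a" where
  "Lop p a = (\<lambda>x. p a x)"

definition Aop :: "('a::ab_group_add \<Rightarrow> 'a \<Rightarrow> 'a) \<Rightarrow> 'a \<Rightarrow> 'a \<Rightarrow> 'a \<Rightarrow> 'a" where
  "Aop p a = (\<lambda>x y. p (p x a) y + p (p y a) x - p a (p x y))"

definition U0 :: "('a::ab_group_add \<Rightarrow> 'a \<Rightarrow> 'a) \<Rightarrow> (complex \<Rightarrow> 'a \<Rightarrow> 'a) \<Rightarrow> ('a \<Rightarrow> 'a) set" where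
  "U0 p sc = cspan (\<lambda>f g x. f x + g x) (\<lambda>x. 0) (\<lambda>c f x. sc c (f x))
     (range (Lop p) \<union> {(\<lambda>x. Lop p a (Lop p b x) - Lop p b (Lop p a x)) | a b. True})"

definition U1 :: "('a::ab_group_add \<Rightarrow> 'a \<Rightarrow> 'a) \<Rightarrow> (complex \<Rightarrow> 'a \<Rightarrow> 'a) \<Rightarrow> ('a \<Rightarrow> 'a \<Rightarrow> 'a) set" where
  "U1 p sc = cspan (\<lambda>f g x y. f x y + g x y) (\<lambda>x y. 0) (\<lambda>c f x y. sc c (f x y))
     (insert p (range (Aop p)))"

type_synonym 'a lie = "'a \<times> ('a \<Rightarrow> 'a) \<times> ('a \<Rightarrow> 'a \<Rightarrow> 'a)"

text \<open>Elements (a, S, B) with a in U_{-1} = A, S in U_0, B in U_1.\<close>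
definition LA :: "('a::ab_group_add \<Rightarrow> 'a \<Rightarrow> 'a) \<Rightarrow> (complex \<Rightarrow> 'a \<Rightarrow> 'a) \<Rightarrow> 'a lie set" where
  "LA p sc = {(a, S, B). S \<in> U0 p sc \<and> B \<in> U1 p sc}"

definition actSB :: "('a::ab_group_add \<Rightarrow> 'a) \<Rightarrow> ('a \<Rightarrow> 'a \<Rightarrow> 'a) \<Rightarrow> 'a \<Rightarrow> 'a \<Rightarrow> 'a" where
  "actSB S B = (\<lambda>x y. S (B x y) - B (S x) y - B x (S y))"

text \<open>The bracket, extended bilinearly and skew-symmetrically from the homogeneous rules.\<close>
definition brL :: "'a::ab_group_add lie \<Rightarrow> 'a lie \<Rightarrow> 'a lie" where
  "brL g h = (case g of (a1, S1, B1) \<Rightarrow> case h of (a2, S2, B2) \<Rightarrow>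
     (S1 a2 - S2 a1,
      \<lambda>y. S1 (S2 y) - S2 (S1 y) + B1 a2 y - B2 a1 y,
      \<lambda>x y. actSB S1 B2 x y - actSB S2 B1 x y))"

definition addL :: "'a::ab_group_add lie \<Rightarrow> 'a lie \<Rightarrow> 'a lie" where
  "addL g h = (case g of (a1, S1, B1) \<Rightarrow> case h of (a2, S2, B2) \<Rightarrow>
     (a1 + a2, \<lambda>y. S1 y + S2 y, \<lambda>x y. B1 x y + B2 x y))"

definition scL :: "(complex \<Rightarrow> 'a \<Rightarrow> 'a) \<Rightarrow> complex \<Rightarrow> 'a lie \<Rightarrow> 'a lie" where
  "scL sc c g = (case g of (a, S, B) \<Rightarrow> (sc c a, \<lambda>y. sc c (S y), \<lambda>x y. sc c (B x y)))"

definition is_rep :: "('a::ab_group_add \<Rightarrow> 'a \<Rightarrow> 'a) \<Rightarrow> (complex \<Rightarrow> 'a \<Rightarrow> 'a)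
    \<Rightarrow> (complex \<Rightarrow> 'v::ab_group_add \<Rightarrow> 'v) \<Rightarrow> ('a lie \<Rightarrow> 'v \<Rightarrow> 'v) \<Rightarrow> bool" where
  "is_rep p sc smV \<rho> \<longleftrightarrow>
     vector_space smV \<and>
     (\<forall>g\<in>LA p sc. Vector_Spaces.linear smV smV (\<rho> g)) \<and>
     (\<forall>g\<in>LA p sc. \<forall>h\<in>LA p sc. \<rho> (addL g h) = (\<lambda>v. \<rho> g v + \<rho> h v)) \<and>
     (\<forall>g\<in>LA p sc. \<forall>c. \<rho> (scL sc c g) = (\<lambda>v. smV c (\<rho> g v))) \<and>
     (\<forall>g\<in>LA p sc. \<forall>h\<in>LA p sc. \<rho> (brL g h) = (\<lambda>v. \<rho> g (\<rho> h v) - \<rho> h (\<rho> g v)))"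

definition is_2graded :: "('a::ab_group_add \<Rightarrow> 'a \<Rightarrow> 'a) \<Rightarrow> (complex \<Rightarrow> 'a \<Rightarrow> 'a)
    \<Rightarrow> (complex \<Rightarrow> 'v::ab_group_add \<Rightarrow> 'v) \<Rightarrow> ('a lie \<Rightarrow> 'v \<Rightarrow> 'v) \<Rightarrow> bool" where
  "is_2graded p sc smV \<rho> \<longleftrightarrow>
     (\<exists>V1 V2. module.subspace smV V1 \<and> module.subspace smV V2 \<and>
        V1 \<noteq> {0} \<and> V2 \<noteq> {0} \<and> V1 \<inter> V2 = {0} \<and>
        (\<forall>v. \<exists>v1\<in>V1. \<exists>v2\<in>V2. v = v1 + v2) \<and>
        (\<forall>a. (\<forall>v\<in>V1. \<rho> (a, \<lambda>x. 0, \<lambda>x y. 0) v = 0) \<and>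
             (\<forall>v\<in>V2. \<rho> (a, \<lambda>x. 0, \<lambda>x y. 0) v \<in> V1)) \<and>
        (\<forall>S\<in>U0 p sc. (\<forall>v\<in>V1. \<rho> (0, S, \<lambda>x y. 0) v \<in> V1) \<and>
             (\<forall>v\<in>V2. \<rho> (0, S, \<lambda>x y. 0) v \<in> V2)) \<and>
        (\<forall>B\<in>U1 p sc. (\<forall>v\<in>V1. \<rho> (0, \<lambda>x. 0, B) v \<in> V2) \<and>
             (\<forall>v\<in>V2. \<rho> (0, \<lambda>x. 0, B) v = 0)))"

end

theory Submission imports Defs begin
lemmas jcomp = jprod_def matmul_def fromMat_def numeral_3_eq_3 oemb_def ore_def zero_prod_def
definition eA :: e3 where "eA = (1,0,0,(((0,0),(0,0)),((0,0),(0,0))),(((0,0),(0,0)),((0,0),(0,0))),(((0,0),(0,0)),((0,0),(0,0))))"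

definition eB :: e3 where "eB = (0,1,0,(((0,0),(0,0)),((0,0),(0,0))),(((0,0),(0,0)),((0,0),(0,0))),(((0,0),(0,0)),((0,0),(0,0))))"

definition eC :: e3 where "eC = (0,0,1,(((0,0),(0,0)),((0,0),(0,0))),(((0,0),(0,0)),((0,0),(0,0))),(((0,0),(0,0)),((0,0),(0,0))))"

definition X12 :: e3 where "X12 = (0,0,0,(((0,0),(0,0)),((0,0),(0,0))),(((0,0),(0,0)),((0,0),(0,0))),(((0,1),(0,0)),((0,0),(0,0))))"

definition Y23 :: e3 where "Y23 = (0,0,0,(((0,0),(1,0)),((0,0),(0,0))),(((0,0),(0,0)),((0,0),(0,0))),(((0,0),(0,0)),((0,0),(0,0))))"

definition XY13 :: e3 where "XY13 = (0,0,0,(((0,0),(0,0)),((0,0),(0,0))),(((0,0),(0,- 1)),((0,0),(0,0))),(((0,0),(0,0)),((0,0),(0,0))))"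

definition Z32 :: e3 where "Z32 = (0,0,0,(((0,0),(0,0)),((- 1,0),(0,0))),(((0,0),(0,0)),((0,0),(0,0))),(((0,0),(0,0)),((0,0),(0,0))))"

definition P12 :: e3 where "P12 = (0,0,0,(((0,0),(0,0)),((0,0),(0,0))),(((0,0),(0,0)),((0,0),(0,0))),(((0,0),(0,0)),((0,0),(0,1))))"

definition O12 :: e3 where "O12 = (0,0,0,(((0,0),(0,0)),((0,0),(0,0))),(((0,0),(0,0)),((0,0),(0,0))),(((1,0),(0,0)),((0,0),(0,0))))"

definition Y13 :: e3 where "Y13 = (0,0,0,(((0,0),(0,0)),((0,0),(0,0))),(((0,0),(- 1,0)),((0,0),(0,0))),(((0,0),(0,0)),((0,0),(0,0))))"

definition YZ12 :: e3 where "YZ12 = (0,0,0,(((0,0),(0,0)),((0,0),(0,0))),(((0,0),(0,0)),((0,0),(0,0))),(((0,0),(0,0)),((0,0),(1,0))))"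

definition YZ13 :: e3 where "YZ13 = (0,0,0,(((0,0),(0,0)),((0,0),(0,0))),(((0,0),(0,0)),((0,0),(- 1,0))),(((0,0),(0,0)),((0,0),(0,0))))"

definition O23 :: e3 where "O23 = (0,0,0,(((1,0),(0,0)),((0,0),(0,0))),(((0,0),(0,0)),((0,0),(0,0))),(((0,0),(0,0)),((0,0),(0,0))))"

definition YZ23 :: e3 where "YZ23 = (0,0,0,(((0,0),(0,0)),((0,0),(1,0))),(((0,0),(0,0)),((0,0),(0,0))),(((0,0),(0,0)),((0,0),(0,0))))"

definition XYZ13 :: e3 where "XYZ13 = (0,0,0,(((0,0),(0,0)),((0,0),(0,0))),(((0,0),(0,0)),((0,0),(0,1))),(((0,0),(0,0)),((0,0),(0,0))))"

definition Q12 :: e3 where "Q12 = (0,0,0,(((0,0),(0,0)),((0,0),(0,0))),(((0,0),(0,0)),((0,0),(0,0))),(((0,0),(0,0)),((0,0),(0,- 1))))"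

definition W23 :: e3 where "W23 = (0,0,0,(((0,0),(0,0)),((0,0),(0,- 1))),(((0,0),(0,0)),((0,0),(0,0))),(((0,0),(0,0)),((0,0),(0,0))))"

definition O13 :: e3 where "O13 = (0,0,0,(((0,0),(0,0)),((0,0),(0,0))),(((1,0),(0,0)),((0,0),(0,0))),(((0,0),(0,0)),((0,0),(0,0))))"

lemmas elem_defs = eA_def eB_def eC_def X12_def Y23_def XY13_def Z32_def P12_def O12_def Y13_def YZ12_def YZ13_def O23_def YZ23_def XYZ13_def Q12_def W23_def O13_def

lemma r1_prod: "jprod X12 Y23 + jprod X12 Y23 = XY13"
  unfolding elem_defs by (simp add: jcomp)

lemma r1_jX: "jprod eB X12 + jprod eB X12 = X12"
  unfolding elem_defs by (simp add: jcomp)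

lemma r1_jY: "jprod eB Y23 + jprod eB Y23 = Y23"
  unfolding elem_defs by (simp add: jcomp)

lemma r1_iY: "jprod eA Y23 + jprod eA Y23 = 0"
  unfolding elem_defs by (simp add: jcomp)

lemma r2_prod: "jprod XY13 Z32 + jprod XY13 Z32 = P12"
  unfolding elem_defs by (simp add: jcomp)

lemma r2_jX: "jprod eC XY13 + jprod eC XY13 = XY13"
  unfolding elem_defs by (simp add: jcomp)

lemma r2_jY: "jprod eC Z32 + jprod eC Z32 = Z32"
  unfolding elem_defs by (simp add: jcomp)

lemma r2_iY: "jprod eA Z32 + jprod eA Z32 = 0"
  unfolding elem_defs by (simp add: jcomp)

lemma r3_prod: "jprod O12 Y13 + jprod O12 Y13 = Y23"
  unfolding elem_defs by (simp add: jcomp)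

lemma r3_jX: "jprod eA O12 + jprod eA O12 = O12"
  unfolding elem_defs by (simp add: jcomp)

lemma r3_jY: "jprod eA Y13 + jprod eA Y13 = Y13"
  unfolding elem_defs by (simp add: jcomp)

lemma r3_iY: "jprod eB Y13 + jprod eB Y13 = 0"
  unfolding elem_defs by (simp add: jcomp)

lemma r4_prod: "jprod Y13 Z32 + jprod Y13 Z32 = YZ12"
  unfolding elem_defs by (simp add: jcomp)

lemma r4_jX: "jprod eC Y13 + jprod eC Y13 = Y13"
  unfolding elem_defs by (simp add: jcomp)

lemma r4_jY: "jprod eC Z32 + jprod eC Z32 = Z32"
  unfolding elem_defs by (simp add: jcomp)

lemma r4_iY: "jprod eA Z32 + jprod eA Z32 = 0"
  unfolding elem_defs by (simp add: jcomp)

lemma r5_prod: "jprod YZ13 O23 + jprod YZ13 O23 = YZ12"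
  unfolding elem_defs by (simp add: jcomp)

lemma r5_jX: "jprod eC YZ13 + jprod eC YZ13 = YZ13"
  unfolding elem_defs by (simp add: jcomp)

lemma r5_jY: "jprod eC O23 + jprod eC O23 = O23"
  unfolding elem_defs by (simp add: jcomp)

lemma r5_iY: "jprod eA O23 + jprod eA O23 = 0"
  unfolding elem_defs by (simp add: jcomp)

lemma r6_prod: "jprod O12 YZ13 + jprod O12 YZ13 = YZ23"
  unfolding elem_defs by (simp add: jcomp)

lemma r6_jX: "jprod eA O12 + jprod eA O12 = O12"
  unfolding elem_defs by (simp add: jcomp)

lemma r6_jY: "jprod eA YZ13 + jprod eA YZ13 = YZ13"
  unfolding elem_defs by (simp add: jcomp)

lemma r6_iY: "jprod eB YZ13 + jprod eB YZ13 = 0"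
  unfolding elem_defs by (simp add: jcomp)

lemma r7_prod: "jprod X12 YZ23 + jprod X12 YZ23 = XYZ13"
  unfolding elem_defs by (simp add: jcomp)

lemma r7_jX: "jprod eB X12 + jprod eB X12 = X12"
  unfolding elem_defs by (simp add: jcomp)

lemma r7_jY: "jprod eB YZ23 + jprod eB YZ23 = YZ23"
  unfolding elem_defs by (simp add: jcomp)

lemma r7_iY: "jprod eA YZ23 + jprod eA YZ23 = 0"
  unfolding elem_defs by (simp add: jcomp)

lemma r8_prod: "jprod XYZ13 O23 + jprod XYZ13 O23 = Q12"
  unfolding elem_defs by (simp add: jcomp)

lemma r8_jX: "jprod eC XYZ13 + jprod eC XYZ13 = XYZ13"
  unfolding elem_defs by (simp add: jcomp)

lemma r8_jY: "jprod eC O23 + jprod eC O23 = O23"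
  unfolding elem_defs by (simp add: jcomp)

lemma r8_iY: "jprod eA O23 + jprod eA O23 = 0"
  unfolding elem_defs by (simp add: jcomp)

lemma r9_prod: "jprod P12 W23 + jprod P12 W23 = O13"
  unfolding elem_defs by (simp add: jcomp)

lemma r9_jX: "jprod eB P12 + jprod eB P12 = P12"
  unfolding elem_defs by (simp add: jcomp)

lemma r9_jY: "jprod eB W23 + jprod eB W23 = W23"
  unfolding elem_defs by (simp add: jcomp)

lemma r9_iY: "jprod eA W23 + jprod eA W23 = 0"
  unfolding elem_defs by (simp add: jcomp)

lemma idem1: "jprod eA eA + jprod eA eA = eA + eA"
  unfolding elem_defs by (simp add: jcomp)

lemma idem2: "jprod eB eB + jprod eB eB = eB + eB"
  unfolding elem_defs by (simp add: jcomp)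

lemma idem3: "jprod eC eC + jprod eC eC = eC + eC"
  unfolding elem_defs by (simp add: jcomp)

lemma orth12: "jprod eA eB + jprod eA eB = 0"
  unfolding elem_defs by (simp add: jcomp)

lemma orth13: "jprod eA eC + jprod eA eC = 0"
  unfolding elem_defs by (simp add: jcomp)

lemma orth23: "jprod eB eC + jprod eB eC = 0"
  unfolding elem_defs by (simp add: jcomp)

lemma c_1: "jprod eA O13 + jprod eA O13 = O13"
  unfolding elem_defs by (simp add: jcomp)

lemma c_3: "jprod eC O13 + jprod eC O13 = O13"
  unfolding elem_defs by (simp add: jcomp)

lemma d_1: "jprod eA O12 + jprod eA O12 = O12"
  unfolding elem_defs by (simp add: jcomp)

lemma d_2: "jprod eB O12 + jprod eB O12 = O12"
  unfolding elem_defs by (simp add: jcomp)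

lemma c_sq: "jprod O13 O13 + jprod O13 O13 = (eA + eC) + (eA + eC)"
  unfolding elem_defs by (simp add: jcomp)

lemma d_sq: "jprod O12 O12 + jprod O12 O12 = (eA + eB) + (eA + eB)"
  unfolding elem_defs by (simp add: jcomp)

lemma PQ: "P12 + Q12 = 0" unfolding elem_defs by (simp add: zero_prod_def)

lemma one_sum: "(1,1,1,0,0,0) = eA + (eB + eC)" unfolding elem_defs by (simp add: zero_prod_def)
lemma oct_cases: obtains a b c d e f g h where "(x::oct) = (((a,b),(c,d)),((e,f),(g,h)))"
  by (metis prod.exhaust)

lemma om_lunit[simp]: "om (oemb 1) x = x" and om_runit[simp]: "om x (oemb 1) = x"
  and om_l0[simp]: "om (oemb 0) x = 0" and om_r0[simp]: "om x (oemb 0) = 0"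
  and om_l0'[simp]: "om 0 x = 0" and om_r0'[simp]: "om x 0 = 0"
  and ocj_0[simp]: "ocj 0 = 0" and ocj_e[simp]: "ocj (oemb k) = oemb k"
  and ocj_ocj[simp]: "ocj (ocj x) = x" and osc_add: "osc (1/2) (y + y) = y"
  by (cases x rule: oct_cases; cases y rule: oct_cases; simp add: oemb_def zero_prod_def)+

lemma s2_add[simp]: "s2 (1/2) ((y::c2) + y) = y"
proof -
  obtain a b c d where "y = ((a,b),(c,d))" by (metis prod.exhaust)
  then show ?thesis by simp
qed

lemma ore_e[simp]: "ore (oemb k) = k" by (simp add: ore_def oemb_def)

lemma jprod_one: "jprod (1,1,1,0,0,0) a = a"
  apply (cases a)
  apply (simp add: jprod_def matmul_def fromMat_def numeral_3_eq_3 oemb_def[symmetric] osc_add split: prod.splits)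
  done

lemma oemb0[simp]: "oemb 0 = 0" by (simp add: oemb_def zero_prod_def)
lemma ore0[simp]: "ore 0 = 0" by (simp add: ore_def zero_prod_def)
lemma osc0[simp]: "osc k 0 = 0" by (simp add: zero_prod_def)
lemma e3zero: "(0::e3) = (0,0,0,0,0,0)" by (simp add: zero_prod_def)

lemma jprod_0l: "jprod 0 a = 0" and jprod_0r: "jprod a 0 = 0"
  by (cases a; simp add: e3zero jprod_def matmul_def fromMat_def numeral_3_eq_3)+

locale sig =
  fixes \<sigma> :: "e3 \<Rightarrow> 'v::ab_group_add \<Rightarrow> 'v"
  assumes lin: "\<And>a u w. \<sigma> a (u + w) = \<sigma> a u + \<sigma> a w"
    and add: "\<And>a b v. \<sigma> (a + b) v = \<sigma> a v + \<sigma> b v"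
    and jor: "\<And>a b v. \<sigma> a (\<sigma> b v) + \<sigma> b (\<sigma> a v) = \<sigma> (jprod a b) v + \<sigma> (jprod a b) v"
    and half: "\<And>u::'v. u + u = 0 \<Longrightarrow> u = 0"
begin

lemma lin0[simp]: "\<sigma> a 0 = 0"
  using lin[of a 0 0] by simp

lemma linneg: "\<sigma> a (- u) = - \<sigma> a u"
  using lin[of a u "-u"] by (simp add: eq_neg_iff_add_eq_0 add.commute)

lemma sig0[simp]: "\<sigma> 0 v = 0"
  using add[of 0 0 v] by simp

lemma half2: "(u::'v) + u = w + w \<Longrightarrow> u = w"
  using half[of "u - w"] by (simp add: algebra_simps)

lemma S: "jprod a b + jprod a b = c \<Longrightarrow> \<sigma> a (\<sigma> b v) + \<sigma> b (\<sigma> a v) = \<sigma> c v"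
  using jor[of a b v] add[of "jprod a b" "jprod a b" v] by simp

lemma idem: "jprod e e + jprod e e = e + e \<Longrightarrow> \<sigma> e (\<sigma> e v) = \<sigma> e v"
  using S[of e e "e+e" v] add[of e e v] half2 by metis

lemma pz:
  assumes id: "\<And>v. \<sigma> e (\<sigma> e v) = \<sigma> e v"
    and z: "\<And>v. \<sigma> e (\<sigma> y v) + \<sigma> y (\<sigma> e v) = 0"
  shows "\<sigma> e (\<sigma> y v) = 0" "\<sigma> y (\<sigma> e v) = 0"
proof -
  have a: "\<sigma> e (\<sigma> y u) = - \<sigma> y (\<sigma> e u)" for u
    using z[of u] by (simp add: eq_neg_iff_add_eq_0)
  have "\<sigma> e (\<sigma> y v) = \<sigma> e (\<sigma> e (\<sigma> y v))" using id by simp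
  also have "\<dots> = - \<sigma> e (\<sigma> y (\<sigma> e v))" by (simp add: a linneg)
  also have "\<dots> = \<sigma> y (\<sigma> e (\<sigma> e v))" by (simp add: a)
  also have "\<dots> = \<sigma> y (\<sigma> e v)" using id by simp
  finally have b: "\<sigma> e (\<sigma> y v) = \<sigma> y (\<sigma> e v)" .
  then have "\<sigma> y (\<sigma> e v) + \<sigma> y (\<sigma> e v) = 0" using z[of v] by simp
  then show c: "\<sigma> y (\<sigma> e v) = 0" by (rule half)
  show "\<sigma> e (\<sigma> y v) = 0" using b c by simp
qed

lemma prodrel:
  assumes idj: "\<And>v. \<sigma> ej (\<sigma> ej v) = \<sigma> ej v"
    and oij: "\<And>v. \<sigma> ei (\<sigma> ej v) = 0"
    and ojk: "\<And>v. \<sigma> ej (\<sigma> ek v) = 0"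
    and jX: "\<And>v. \<sigma> ej (\<sigma> x v) + \<sigma> x (\<sigma> ej v) = \<sigma> x v"
    and jY: "\<And>v. \<sigma> ej (\<sigma> y v) + \<sigma> y (\<sigma> ej v) = \<sigma> y v"
    and iY: "\<And>v. \<sigma> ei (\<sigma> y v) = 0"
    and C: "\<And>v. \<sigma> x (\<sigma> y v) + \<sigma> y (\<sigma> x v) = \<sigma> c v"
  shows "\<sigma> ei (\<sigma> c (\<sigma> ek v)) = \<sigma> ei (\<sigma> x (\<sigma> ej (\<sigma> ej (\<sigma> y (\<sigma> ek v)))))"
proof -
  have 1: "\<sigma> ei (\<sigma> c (\<sigma> ek v)) = \<sigma> ei (\<sigma> x (\<sigma> y (\<sigma> ek v)))"
    using C[of "\<sigma> ek v", symmetric] by (simp add: lin iY)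
  have 2: "\<sigma> y (\<sigma> ek v) = \<sigma> ej (\<sigma> y (\<sigma> ek v))"
    using jY[of "\<sigma> ek v"] by (simp add: ojk)
  have 3: "\<sigma> ei (\<sigma> x w) = \<sigma> ei (\<sigma> x (\<sigma> ej w))" for w
  proof -
    have "\<sigma> ei (\<sigma> x w) = \<sigma> ei (\<sigma> ej (\<sigma> x w) + \<sigma> x (\<sigma> ej w))" using jX[of w] by simp
    then show ?thesis by (simp add: lin oij)
  qed
  show ?thesis using 1 2 3 idj by metis
qed

lemma pdec:
  assumes oij: "\<And>v. \<sigma> ei (\<sigma> ej v) = 0" and oji: "\<And>v. \<sigma> ej (\<sigma> ei v) = 0"
    and iX: "\<And>v. \<sigma> ei (\<sigma> x v) + \<sigma> x (\<sigma> ei v) = \<sigma> x v"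
    and jX: "\<And>v. \<sigma> ej (\<sigma> x v) + \<sigma> x (\<sigma> ej v) = \<sigma> x v"
  shows "\<sigma> x v = \<sigma> ei (\<sigma> x (\<sigma> ej v)) + \<sigma> ej (\<sigma> x (\<sigma> ei v))"
proof -
  have a: "\<sigma> ei (\<sigma> x v) = \<sigma> ei (\<sigma> x (\<sigma> ej v))"
  proof -
    have "\<sigma> ei (\<sigma> x v) = \<sigma> ei (\<sigma> ej (\<sigma> x v) + \<sigma> x (\<sigma> ej v))" using jX[of v] by simp
    then show ?thesis by (simp add: lin oij)
  qed
  have b: "\<sigma> x (\<sigma> ei v) = \<sigma> ej (\<sigma> x (\<sigma> ei v))"
    using jX[of "\<sigma> ei v", symmetric] by (simp add: oji)
  show ?thesis using iX[of v] a b by simp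
qed

lemma all_zero: "\<sigma> a v = 0"
proof -
  note id1 = idem[OF idem1] and id2 = idem[OF idem2] and id3 = idem[OF idem3]
  have o12: "\<And>v. \<sigma> eA (\<sigma> eB v) = 0" "\<And>v. \<sigma> eB (\<sigma> eA v) = 0"
    using pz[OF id1 S[OF orth12, unfolded sig0]] by auto
  have o13: "\<And>v. \<sigma> eA (\<sigma> eC v) = 0" "\<And>v. \<sigma> eC (\<sigma> eA v) = 0"
    using pz[OF id1 S[OF orth13, unfolded sig0]] by auto
  have o23: "\<And>v. \<sigma> eB (\<sigma> eC v) = 0" "\<And>v. \<sigma> eC (\<sigma> eB v) = 0"
    using pz[OF id2 S[OF orth23, unfolded sig0]] by auto
  define M where "M = (\<lambda>ei ej c v. \<sigma> ei (\<sigma> c (\<sigma> ej v)))"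
  have R1: "M eA eC XY13 v = M eA eB X12 (M eB eC Y23 v)" for v
    unfolding M_def by (rule prodrel[OF id2 o12(1) o23(1) S[OF r1_jX] S[OF r1_jY]
        pz(1)[OF id1 S[OF r1_iY, unfolded sig0]] S[OF r1_prod]])
  have R2: "M eA eB P12 v = M eA eC XY13 (M eC eB Z32 v)" for v
    unfolding M_def by (rule prodrel[OF id3 o13(1) o23(2) S[OF r2_jX] S[OF r2_jY]
        pz(1)[OF id1 S[OF r2_iY, unfolded sig0]] S[OF r2_prod]])
  have R3: "M eB eC Y23 v = M eB eA O12 (M eA eC Y13 v)" for v
    unfolding M_def by (rule prodrel[OF id1 o12(2) o13(1) S[OF r3_jX] S[OF r3_jY]
        pz(1)[OF id2 S[OF r3_iY, unfolded sig0]] S[OF r3_prod]])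
  have R4: "M eA eB YZ12 v = M eA eC Y13 (M eC eB Z32 v)" for v
    unfolding M_def by (rule prodrel[OF id3 o13(1) o23(2) S[OF r4_jX] S[OF r4_jY]
        pz(1)[OF id1 S[OF r4_iY, unfolded sig0]] S[OF r4_prod]])
  have R5: "M eA eB YZ12 v = M eA eC YZ13 (M eC eB O23 v)" for v
    unfolding M_def by (rule prodrel[OF id3 o13(1) o23(2) S[OF r5_jX] S[OF r5_jY]
        pz(1)[OF id1 S[OF r5_iY, unfolded sig0]] S[OF r5_prod]])
  have R6: "M eB eC YZ23 v = M eB eA O12 (M eA eC YZ13 v)" for v
    unfolding M_def by (rule prodrel[OF id1 o12(2) o13(1) S[OF r6_jX] S[OF r6_jY]
        pz(1)[OF id2 S[OF r6_iY, unfolded sig0]] S[OF r6_prod]])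
  have R7: "M eA eC XYZ13 v = M eA eB X12 (M eB eC YZ23 v)" for v
    unfolding M_def by (rule prodrel[OF id2 o12(1) o23(1) S[OF r7_jX] S[OF r7_jY]
        pz(1)[OF id1 S[OF r7_iY, unfolded sig0]] S[OF r7_prod]])
  have R8: "M eA eB Q12 v = M eA eC XYZ13 (M eC eB O23 v)" for v
    unfolding M_def by (rule prodrel[OF id3 o13(1) o23(2) S[OF r8_jX] S[OF r8_jY]
        pz(1)[OF id1 S[OF r8_iY, unfolded sig0]] S[OF r8_prod]])
  have R9: "M eA eC O13 v = M eA eB P12 (M eB eC W23 v)" for v
    unfolding M_def by (rule prodrel[OF id2 o12(1) o23(1) S[OF r9_jX] S[OF r9_jY]
        pz(1)[OF id1 S[OF r9_iY, unfolded sig0]] S[OF r9_prod]])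
  have PQv: "M eA eB P12 v = M eA eB Q12 v" for v
  proof -
    have "M eA eB P12 v = M eA eB X12 (M eB eA O12 (M eA eC Y13 (M eC eB Z32 v)))"
      by (simp only: R2 R1 R3)
    also have "\<dots> = M eA eB X12 (M eB eA O12 (M eA eC YZ13 (M eC eB O23 v)))"
      by (simp only: R4[symmetric] R5)
    also have "\<dots> = M eA eB Q12 v"
      by (simp only: R6[symmetric] R7[symmetric] R8)
    finally show ?thesis .
  qed
  have negQ: "M eA eB Q12 v = - M eA eB P12 v" for v
  proof -
    have "\<sigma> Q12 u = - \<sigma> P12 u" for u
      using add[of P12 Q12 u] PQ by (simp add: eq_neg_iff_add_eq_0 add.commute)
    then show ?thesis unfolding M_def by (simp add: linneg)
  qed
  have P0: "M eA eB P12 v = 0" for v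
  proof -
    have "M eA eB P12 v = - M eA eB P12 v" using PQv[of v] negQ[of v] by metis
    then have "M eA eB P12 v + M eA eB P12 v = 0" by (simp add: eq_neg_iff_add_eq_0)
    then show ?thesis by (rule half)
  qed
  have C0: "M eA eC O13 v = 0" for v using R9 P0 by simp
  have cdec: "\<sigma> O13 v = \<sigma> eC (\<sigma> O13 (\<sigma> eA v))" for v
    using pdec[OF o13 S[OF c_1] S[OF c_3], of v] C0[of v] unfolding M_def by (simp only: add_0_left)
  have csq: "\<sigma> O13 (\<sigma> O13 v) = \<sigma> eA v + \<sigma> eC v" for v
  proof -
    have "\<sigma> ((eA + eC) + (eA + eC)) v = (\<sigma> eA v + \<sigma> eC v) + (\<sigma> eA v + \<sigma> eC v)"
      by (simp only: add)
    then show ?thesis using S[OF c_sq, of v] by (metis half2)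
  qed
  have Ac: "\<sigma> eA (\<sigma> O13 v) = 0" for v
    by (subst cdec) (simp add: o13)
  have "\<sigma> O13 (\<sigma> O13 v) = 0" for v
    using cdec[of "\<sigma> O13 v"] by (simp add: Ac)
  then have AC: "\<sigma> eA v + \<sigma> eC v = 0" for v using csq by simp
  have A0: "\<sigma> eA v = 0" for v
  proof -
    have "\<sigma> eA v = \<sigma> eA (\<sigma> eA v) + \<sigma> eA (\<sigma> eC v)" using id1 o13 by simp
    also have "\<dots> = 0" by (simp only: lin[symmetric] AC lin0)
    finally show ?thesis .
  qed
  have C30: "\<sigma> eC v = 0" for v using AC[of v] A0[of v] by simp
  have ddec: "\<sigma> O12 v = 0" for v
    using pdec[OF o12 S[OF d_1] S[OF d_2], of v] A0 by simp
  have dsq: "\<sigma> O12 (\<sigma> O12 v) = \<sigma> eA v + \<sigma> eB v" for v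
  proof -
    have "\<sigma> ((eA + eB) + (eA + eB)) v = (\<sigma> eA v + \<sigma> eB v) + (\<sigma> eA v + \<sigma> eB v)"
      by (simp only: add)
    then show ?thesis using S[OF d_sq, of v] by (metis half2)
  qed
  have B0: "\<sigma> eB v = 0" for v using dsq[of v] ddec A0 by simp
  have one0: "\<sigma> (1,1,1,0,0,0) v = 0" for v
    unfolding one_sum by (simp add: add A0 B0 C30)
  have "\<sigma> a v + \<sigma> a v = 0"
    using jor[of "(1,1,1,0,0,0)" a v] by (simp add: one0 jprod_one)
  then show ?thesis by (rule half)
qed

end
lemma half_vs:
  fixes u :: "'v::ab_group_add"
  assumes "vector_space (smV :: complex \<Rightarrow> 'v \<Rightarrow> 'v)" and "u + u = 0"
  shows "u = 0"
proof -
  interpret vector_space smV by fact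
  have z: "smV c 0 = 0" for c
    using scale_right_distrib[of c 0 0] by simp
  have "u = smV (1/2 + 1/2) u" by simp
  also have "\<dots> = smV (1/2) (u + u)" by (simp only: scale_left_distrib scale_right_distrib)
  also have "\<dots> = 0" using assms(2) z by simp
  finally show ?thesis .
qed

theorem mainTheorem6:
  fixes smV :: "complex \<Rightarrow> 'v::ab_group_add \<Rightarrow> 'v"
    and \<rho> :: "e3 lie \<Rightarrow> 'v \<Rightarrow> 'v"
  assumes "is_rep jprod esc smV \<rho>"
    and "is_2graded jprod esc smV \<rho>"
  shows "\<forall>a. \<rho> (a, \<lambda>x. 0, \<lambda>x y. 0) = (\<lambda>v. 0)"
proof -
  note rep = assms(1)[unfolded is_rep_def]
  have vs: "vector_space smV" using rep by blast
  have linLA: "\<And>g. g \<in> LA jprod esc \<Longrightarrow> Vector_Spaces.linear smV smV (\<rho> g)" using rep by blast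
  have addLA: "\<And>g h. g \<in> LA jprod esc \<Longrightarrow> h \<in> LA jprod esc \<Longrightarrow> \<rho> (addL g h) = (\<lambda>v. \<rho> g v + \<rho> h v)"
    using rep by blast
  have brLA: "\<And>g h. g \<in> LA jprod esc \<Longrightarrow> h \<in> LA jprod esc \<Longrightarrow> \<rho> (brL g h) = (\<lambda>v. \<rho> g (\<rho> h v) - \<rho> h (\<rho> g v))"
    using rep by blast
  have linadd: "\<rho> g (u + w) = \<rho> g u + \<rho> g w" if "g \<in> LA jprod esc" for g u w
    using linLA[OF that] unfolding Vector_Spaces.linear_iff by blast
  have z0: "(\<lambda>x::e3. 0::e3) \<in> U0 jprod esc" unfolding U0_def by (rule cspan_zero)
  have z1: "(\<lambda>(x::e3) (y::e3). 0::e3) \<in> U1 jprod esc" unfolding U1_def by (rule cspan_zero)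
  have j1: "jprod \<in> U1 jprod esc" unfolding U1_def by (rule cspan_gen) simp
  have l0: "(\<lambda>y. jprod a y) \<in> U0 jprod esc" for a
    unfolding U0_def by (rule cspan_gen) (auto simp: Lop_def[abs_def])
  define T where "T a = \<rho> (a, \<lambda>x. 0, \<lambda>x y. 0)" for a
  define Q where "Q = \<rho> (0, \<lambda>x. 0, jprod)"
  define K where "K a = \<rho> (0, \<lambda>y. jprod a y, \<lambda>x y. 0)" for a
  have TLA: "(a, \<lambda>x. 0, \<lambda>x y. 0) \<in> LA jprod esc" for a using z0 z1 by (simp add: LA_def)
  have QLA: "(0, \<lambda>x. 0, jprod) \<in> LA jprod esc" using z0 j1 by (simp add: LA_def)
  have KLA: "(0, \<lambda>y. jprod a y, \<lambda>x y. 0) \<in> LA jprod esc" for a using l0 z1 by (simp add: LA_def)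
  have Tlin: "T a (u + w) = T a u + T a w" for a u w unfolding T_def by (rule linadd[OF TLA])
  have Qlin: "Q (u + w) = Q u + Q w" for u w unfolding Q_def by (rule linadd[OF QLA])
  have Klin: "K a (u + w) = K a u + K a w" for a u w unfolding K_def by (rule linadd[OF KLA])
  have T0: "T a 0 = 0" for a using Tlin[of a 0 0] by simp
  have Q0: "Q 0 = 0" using Qlin[of 0 0] by simp
  have Tdiff: "T a (u - w) = T a u - T a w" for a u w
    using Tlin[of a "u - w" w] by (simp add: algebra_simps)
  have Qdiff: "Q (u - w) = Q u - Q w" for u w
    using Qlin[of "u - w" w] by (simp add: algebra_simps)
  have Tneg: "T a (- u) = - T a u" for a u
    using Tdiff[of a 0 u] T0 by simp
  have Qneg: "Q (- u) = - Q u" for u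
    using Qlin[of u "-u"] Q0 by (simp add: eq_neg_iff_add_eq_0 add.commute)
  have Tadd: "T (a + b) v = T a v + T b v" for a b v
  proof -
    have "addL (a, \<lambda>x. 0, \<lambda>x y. 0) (b, \<lambda>x. 0, \<lambda>x y. 0) = (a + b, \<lambda>x. 0, \<lambda>x y. 0)"
      by (simp add: addL_def)
    then have "\<rho> (a + b, \<lambda>x. 0, \<lambda>x y. 0) = (\<lambda>v. T a v + T b v)"
      using addLA[OF TLA TLA, of a b] unfolding T_def by simp
    then show ?thesis unfolding T_def by simp
  qed
  obtain V1 V2 where V: "module.subspace smV V1" "\<forall>v. \<exists>v1\<in>V1. \<exists>v2\<in>V2. v = v1 + v2"
    "\<forall>a. (\<forall>v\<in>V1. T a v = 0) \<and> (\<forall>v\<in>V2. T a v \<in> V1)"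
    using assms(2) unfolding is_2graded_def T_def by blast
  have TV1: "T b u \<in> V1" for b u
  proof -
    obtain v1 v2 where "v1 \<in> V1" "v2 \<in> V2" "u = v1 + v2" using V(2) by blast
    then have "T b u = T b v1 + T b v2" using Tlin by simp
    also have "\<dots> = T b v2" using V(3) \<open>v1 \<in> V1\<close> by (metis add_0)
    finally show ?thesis using V(3) \<open>v2 \<in> V2\<close> by metis
  qed
  have TT: "T a (T b u) = 0" for a b u using V(3) TV1 by blast
  have K: "K a v = Q (T a v) - T a (Q v)" for a v
  proof -
    have "brL (0, \<lambda>x. 0, jprod) (a, \<lambda>x. 0, \<lambda>x y. 0) = (0, \<lambda>y. jprod a y, \<lambda>x y. 0)"
      by (simp add: brL_def actSB_def jprod_0l jprod_0r)
    then have "\<rho> (0, \<lambda>y. jprod a y, \<lambda>x y. 0) = (\<lambda>v. Q (T a v) - T a (Q v))"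
      using brLA[OF QLA TLA, of a] unfolding Q_def T_def by simp
    then show ?thesis unfolding K_def by simp
  qed
  have Tprod: "T (jprod a b) v = - T a (Q (T b v)) - T b (Q (T a v))" for a b v
  proof -
    have "brL (0, \<lambda>y. jprod a y, \<lambda>x y. 0) (b, \<lambda>x. 0, \<lambda>x y. 0) = (jprod a b, \<lambda>x. 0, \<lambda>x y. 0)"
      by (simp add: brL_def actSB_def jprod_0l jprod_0r)
    then have "\<rho> (jprod a b, \<lambda>x. 0, \<lambda>x y. 0) = (\<lambda>v. K a (T b v) - T b (K a v))"
      using brLA[OF KLA TLA, of a b] unfolding K_def T_def by simp
    then have "T (jprod a b) v = K a (T b v) - T b (K a v)"
      unfolding T_def by simp
    also have "\<dots> = - T a (Q (T b v)) - T b (Q (T a v))"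
      by (simp add: K TT Q0 Tdiff)
    finally show ?thesis .
  qed
  define \<sigma> where "\<sigma> a v = - (Q (T a v) + Q (T a v))" for a v
  have "sig \<sigma>"
  proof
    show "\<sigma> a (u + w) = \<sigma> a u + \<sigma> a w" for a u w
      unfolding \<sigma>_def by (simp add: Tlin Qlin algebra_simps)
    show "\<sigma> (a + b) v = \<sigma> a v + \<sigma> b v" for a b v
      unfolding \<sigma>_def by (simp add: Tadd Qlin algebra_simps)
    show "\<sigma> a (\<sigma> b v) + \<sigma> b (\<sigma> a v) = \<sigma> (jprod a b) v + \<sigma> (jprod a b) v" for a b v
      unfolding \<sigma>_def by (simp add: Tprod Tlin Qlin Tneg Qneg Tdiff Qdiff algebra_simps)
    show "u + u = 0 \<Longrightarrow> u = 0" for u :: 'v using half_vs[OF vs] .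
  qed
  then have sz: "\<sigma> a v = 0" for a v by (rule sig.all_zero)
  have P0: "Q (T a v) = 0" for a v
  proof -
    have "Q (T a v) + Q (T a v) = 0" using sz[of a v] unfolding \<sigma>_def by (simp only: neg_equal_0_iff_equal)
    then show ?thesis by (rule half_vs[OF vs])
  qed
  show ?thesis
  proof (intro allI ext)
    fix a v
    have "T a v = T (jprod (1,1,1,0,0,0) a) v" by (simp add: jprod_one)
    also have "\<dots> = 0" by (simp add: Tprod P0 T0)
    finally show "\<rho> (a, \<lambda>x. 0, \<lambda>x y. 0) v = 0" unfolding T_def .
  qed
qed
end
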